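(* Consider the two-armed Gaussian bandit with two candidate models described in the context, under disagreement $\phi(\nu)=1$, $\phi(\gamma)=2$, with $\Delta_1<0<\Delta_2$, and let $\mu$ be the unique invariant probability measure on $(0,1)$ of the posterior process $\{\pi_t\}$. Then for every $\varepsilon\in(0,1/2)$, $\mu([\varepsilon,1-\varepsilon])>0$. In particular, in the stationary regime both actions are chosen with strictly positive long-run frequency, i.e. $\int\pi\,\mu(d\pi)\in(0,1)$.
   Context: Actions are $\mathcal A=\{1,2\}$. True environment: conditional on the past and on $A_t=i$, $R_t\sim\mathcal N(g(i),1)$. Two candidate models $\nu=(\nu_1,\nu_2)$, $\gamma=(\gamma_1,\gamma_2)\in\mathbb R^2$; under model $\theta$ the agent believes $R_t\mid A_t=i\sim\mathcal N(\theta_i,1)$ with density $f_\theta(r\mid i)$; $\phi(\theta)=\arg\max_i\theta_i$ (assumed unique). Thompson Sampling: prior $\pi_0\in(0,1)$ on $\nu$; at each date draw $\theta_t=\nu$ w.p. $\pi_t$, else $\gamma$; play $A_t=\phi(\theta_t)$ (so action 1 is played with probability $\pi_t$); observe $R_t$; Bayes update $\pi_{t+1}=\pi_t f_\nu(R_t\mid A_t)/(\pi_t f_\nu(R_t\mid A_t)+(1-\pi_t)f_\gamma(R_t\mid A_t))$. $\Delta_i:=\mathbb E_{R\sim\mathcal N(g(i),1)}[\log f_\nu(R\mid i)-\log f_\gamma(R\mid i)]$. In this regime the posterior process is a positive Harris recurrent Markov chain on $(0,1)$ with a unique invariant probability measure $\mu$. *)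

theory Defs
  imports "HOL-Probability.Probability"
begin

text \<open>Models are functions from actions (1 and 2) to mean rewards.\<close>

definition fdens :: "(nat \<Rightarrow> real) \<Rightarrow> nat \<Rightarrow> real \<Rightarrow> real" where
  "fdens \<theta> i r = normal_density (\<theta> i) 1 r"

definition reward_dist :: "(nat \<Rightarrow> real) \<Rightarrow> nat \<Rightarrow> real measure" where
  "reward_dist g i = density lborel (normal_density (g i) 1)"

text \<open>Greedy action of a model (argmax over {1,2}; assumed unique).\<close>
definition phi :: "(nat \<Rightarrow> real) \<Rightarrow> nat" where
  "phi \<theta> = (if \<theta> 2 < \<theta> 1 then 1 else 2)"

definition post_update :: "(nat \<Rightarrow> real) \<Rightarrow> (nat \<Rightarrow> real) \<Rightarrow> nat \<Rightarrow> real \<Rightarrow> real \<Rightarrow> real" where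
  "post_update \<nu> \<gamma> i p r =
     p * fdens \<nu> i r / (p * fdens \<nu> i r + (1 - p) * fdens \<gamma> i r)"

definition KL_diff :: "(nat \<Rightarrow> real) \<Rightarrow> (nat \<Rightarrow> real) \<Rightarrow> (nat \<Rightarrow> real) \<Rightarrow> nat \<Rightarrow> real" where
  "KL_diff g \<nu> \<gamma> i =
     (\<integral> r. ln (fdens \<nu> i r) - ln (fdens \<gamma> i r) \<partial>reward_dist g i)"

text \<open>Transition probability of the Thompson sampling posterior chain:
  from p, with probability p sample nu and play phi nu, otherwise play phi gamma.\<close>
definition TS_kernel :: "(nat \<Rightarrow> real) \<Rightarrow> (nat \<Rightarrow> real) \<Rightarrow> (nat \<Rightarrow> real) \<Rightarrow> real \<Rightarrow> real set \<Rightarrow> ennreal" where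
  "TS_kernel g \<nu> \<gamma> p A =
     ennreal p * emeasure (reward_dist g (phi \<nu>)) {r. post_update \<nu> \<gamma> (phi \<nu>) p r \<in> A}
   + ennreal (1 - p) * emeasure (reward_dist g (phi \<gamma>)) {r. post_update \<nu> \<gamma> (phi \<gamma>) p r \<in> A}"

definition TS_invariant :: "(nat \<Rightarrow> real) \<Rightarrow> (nat \<Rightarrow> real) \<Rightarrow> (nat \<Rightarrow> real) \<Rightarrow> real measure \<Rightarrow> bool" where
  "TS_invariant g \<nu> \<gamma> \<mu> \<longleftrightarrow>
     sets \<mu> = sets borel \<and> prob_space \<mu> \<and> emeasure \<mu> {0<..<1} = 1 \<and>
     (\<forall>A \<in> sets borel. emeasure \<mu> A = (\<integral>\<^sup>+ p. TS_kernel g \<nu> \<gamma> p A \<partial>\<mu>))"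

end

theory Submission
  imports Defs
begin

lemma dens_pos:
  fixes a b m :: real assumes "a < b"
  shows "0 < emeasure (density lborel (normal_density m 1)) {a<..<b}"
proof -
  have "emeasure (density lborel (normal_density m 1)) {a<..<b}
      = (\<integral>\<^sup>+x. ennreal (normal_density m 1 x) * indicator {a<..<b} x \<partial>lborel)"
    by (subst emeasure_density) auto
  moreover have "(\<integral>\<^sup>+x. ennreal (normal_density m 1 x) * indicator {a<..<b} x \<partial>lborel) \<noteq> 0"
  proof
    have np: "\<And>x. normal_density m 1 x \<noteq> 0" using normal_density_pos[of 1 m] by (metis less_numeral_extra(1) order_less_irrefl)
    assume "(\<integral>\<^sup>+x. ennreal (normal_density m 1 x) * indicator {a<..<b} x \<partial>lborel) = 0"
    then have "AE x in lborel. ennreal (normal_density m 1 x) * indicator {a<..<b} x = 0"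
      by (subst (asm) nn_integral_0_iff_AE) auto
    then have "AE x in lborel. x \<notin> {a<..<b}"
      by eventually_elim (auto simp: np indicator_def)
    then have "emeasure lborel {x\<in>space lborel. \<not> x \<notin> {a<..<b}} = 0"
      by (subst (asm) AE_iff_measurable[OF _ refl]) auto
    moreover have "{x\<in>space lborel. \<not> x \<notin> {a<..<b}} = {a<..<b}" by auto
    ultimately have "emeasure lborel {a<..<b} = 0" by simp
    then show False using assms by simp
  qed
  ultimately show ?thesis by (simp add: zero_less_iff_neq_zero)
qed

lemma fdens_pos: "0 < fdens \<theta> i r"
  unfolding fdens_def by (rule normal_density_pos) simp

lemma post_meas: "(\<lambda>r. post_update \<nu> \<gamma> i p r) \<in> borel_measurable borel"
  unfolding post_update_def fdens_def normal_density_def by measurable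

lemma pre_pos:
  fixes \<nu> \<gamma> g :: "nat \<Rightarrow> real"
  assumes ne: "\<nu> 1 \<noteq> \<gamma> 1" and p: "0 < p" "p < 1" and e: "0 < \<epsilon>" "\<epsilon> < 1/2"
  shows "0 < emeasure (reward_dist g 1) {r. post_update \<nu> \<gamma> 1 p r \<in> {\<epsilon>..1-\<epsilon>}}"
proof -
  define a where "a = \<nu> 1"
  define c where "c = \<gamma> 1"
  define L where "L = ln p - ln (1-p)"
  define r0 where "r0 = (2 * L / (c - a) + a + c) / 2"
  have ca: "c - a \<noteq> 0" using ne a_def c_def by simp
  have key: "ln p - (r0-a)^2/2 = ln (1-p) - (r0-c)^2/2"
  proof -
    have "(r0-a)^2 - (r0-c)^2 = (c-a)*(2*r0 - a - c)" by (simp add: algebra_simps power2_eq_square)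
    also have "2*r0 - a - c = 2 * L / (c - a)" unfolding r0_def using ca by (simp add: field_simps)
    also have "(c-a) * (2 * L / (c - a)) = 2 * L" using ca by simp
    finally show ?thesis unfolding L_def by simp
  qed
  have eqp: "p * exp (- ((r0-a)^2) / 2) = (1-p) * exp (- ((r0-c)^2) / 2)"
  proof -
    have k2: "ln p + (- ((r0-a)^2) / 2) = ln (1-p) + (- ((r0-c)^2) / 2)" using key by simp
    have "p * exp (- ((r0-a)^2) / 2) = exp (ln p + (- ((r0-a)^2) / 2))" using p by (simp only: exp_add exp_ln)
    also have "\<dots> = exp (ln (1-p) + (- ((r0-c)^2) / 2))" using k2 by simp
    also have "\<dots> = (1-p) * exp (- ((r0-c)^2) / 2)" using p by (simp only: exp_add exp_ln diff_gt_0_iff_gt)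
    finally show ?thesis .
  qed
  have eqf: "p * fdens \<nu> 1 r0 = (1-p) * fdens \<gamma> 1 r0"
    unfolding fdens_def normal_density_def a_def[symmetric] c_def[symmetric]
    using eqp by (simp add: field_simps)
  have X: "0 < p * fdens \<nu> 1 r0" using p fdens_pos by simp
  have half: "post_update \<nu> \<gamma> 1 p r0 = 1/2"
    unfolding post_update_def eqf[symmetric] using X p(1) fdens_pos[of \<nu> 1 r0] by (simp add: field_simps)
  have cont: "isCont (\<lambda>r. post_update \<nu> \<gamma> 1 p r) r0"
  proof -
    have "0 < p * fdens \<nu> 1 r0 + (1-p) * fdens \<gamma> 1 r0" using X p fdens_pos[of \<gamma> 1 r0] by (simp add: add_pos_pos)
    then show ?thesis
      unfolding post_update_def fdens_def normal_density_def
      by (intro continuous_intros) auto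
  qed
  obtain S where S: "open S" "r0 \<in> S" "\<forall>x\<in>S. post_update \<nu> \<gamma> 1 p x \<in> {\<epsilon><..<1-\<epsilon>}"
    using cont[unfolded continuous_at_open, rule_format, of "{\<epsilon><..<1-\<epsilon>}"] half e by auto
  obtain d where d: "0 < d" "ball r0 d \<subseteq> S" using S open_contains_ball by blast
  have sub: "{r0-d<..<r0+d} \<subseteq> {r. post_update \<nu> \<gamma> 1 p r \<in> {\<epsilon>..1-\<epsilon>}}"
  proof
    fix x assume "x \<in> {r0-d<..<r0+d}"
    then have "x \<in> ball r0 d" by (auto simp: dist_real_def)
    then have "x \<in> S" using d by auto
    then show "x \<in> {r. post_update \<nu> \<gamma> 1 p r \<in> {\<epsilon>..1-\<epsilon>}}" using S by auto
  qed
  have ms: "{r. post_update \<nu> \<gamma> 1 p r \<in> {\<epsilon>..1-\<epsilon>}} \<in> sets borel"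
  proof -
    have "{r. post_update \<nu> \<gamma> 1 p r \<in> {\<epsilon>..1-\<epsilon>}} = (\<lambda>r. post_update \<nu> \<gamma> 1 p r) -` {\<epsilon>..1-\<epsilon>} \<inter> space borel"
      by auto
    moreover have "(\<lambda>r. post_update \<nu> \<gamma> 1 p r) -` {\<epsilon>..1-\<epsilon>} \<inter> space borel \<in> sets borel"
      by (rule measurable_sets[OF post_meas]) simp
    ultimately show ?thesis by (simp only:)
  qed
  have "0 < emeasure (reward_dist g 1) {r0-d<..<r0+d}"
    unfolding reward_dist_def using dens_pos[of "r0-d" "r0+d" "g 1"] d by simp
  also have "\<dots> \<le> emeasure (reward_dist g 1) {r. post_update \<nu> \<gamma> 1 p r \<in> {\<epsilon>..1-\<epsilon>}}"
    by (rule emeasure_mono[OF sub]) (unfold reward_dist_def sets_density sets_lborel, rule ms)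
  finally show ?thesis .
qed

lemma KL_ne:
  assumes "KL_diff g \<nu> \<gamma> 1 < 0" shows "\<nu> 1 \<noteq> \<gamma> 1"
proof
  assume "\<nu> 1 = \<gamma> 1"
  then have "KL_diff g \<nu> \<gamma> 1 = 0" unfolding KL_diff_def fdens_def by simp
  then show False using assms by simp
qed

theorem corollary2:
  fixes g \<nu> \<gamma> :: "nat \<Rightarrow> real" and \<mu> :: "real measure"
  assumes "\<nu> 1 \<noteq> \<nu> 2" and "\<gamma> 1 \<noteq> \<gamma> 2"
    and "phi \<nu> = 1" and "phi \<gamma> = 2"
    and "KL_diff g \<nu> \<gamma> 1 < 0" and "0 < KL_diff g \<nu> \<gamma> 2"
    and "TS_invariant g \<nu> \<gamma> \<mu>"
    and "\<forall>\<mu>'. TS_invariant g \<nu> \<gamma> \<mu>' \<longrightarrow> \<mu>' = \<mu>"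
  shows "(\<forall>\<epsilon>::real. 0 < \<epsilon> \<and> \<epsilon> < 1/2 \<longrightarrow> measure \<mu> {\<epsilon>..1-\<epsilon>} > 0)
         \<and> 0 < (\<integral>p. p \<partial>\<mu>) \<and> (\<integral>p. p \<partial>\<mu>) < 1"
proof -
  have ne: "\<nu> 1 \<noteq> \<gamma> 1" using KL_ne assms(5) .
  have sM: "sets \<mu> = sets borel" and P: "prob_space \<mu>" and m01: "emeasure \<mu> {0<..<1} = 1"
    and inv: "\<And>A. A \<in> sets borel \<Longrightarrow> emeasure \<mu> A = (\<integral>\<^sup>+ p. TS_kernel g \<nu> \<gamma> p A \<partial>\<mu>)"
    using assms(7) unfolding TS_invariant_def by auto
  interpret P: prob_space \<mu> by (rule P)
  have spM: "space \<mu> = UNIV" using sets_eq_imp_space_eq[OF sM] by simp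
  have idm: "(\<lambda>p::real. p) \<in> borel_measurable \<mu>"
    unfolding measurable_cong_sets[OF sM refl] by simp
  have AE01: "AE p in \<mu>. p \<in> {0<..<1}"
  proof -
    have pr: "Measurable.pred \<mu> (\<lambda>p. p \<in> {0<..<1::real})"
      unfolding measurable_cong_sets[OF sM refl] by measurable
    have "{x \<in> space \<mu>. x \<in> {0<..<1::real}} = {0<..<1}" by (auto simp add: spM)
    then show ?thesis using m01 by (subst P.AE_iff_emeasure_eq_1[OF pr]) (simp only:)
  qed
  have part1: "0 < measure \<mu> {\<epsilon>..1-\<epsilon>}" if e: "0 < \<epsilon>" "\<epsilon> < 1/2" for \<epsilon> :: real
  proof -
    define A where "A = {\<epsilon>..1-\<epsilon>}"
    define G where "G = (\<lambda>p. ennreal p * emeasure (reward_dist g 1) {r. post_update \<nu> \<gamma> 1 p r \<in> A})"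
    interpret R: prob_space "reward_dist g 1"
      unfolding reward_dist_def by (rule prob_space_normal_density) simp
    have Gm: "G \<in> borel_measurable \<mu>"
    proof -
      have "(\<lambda>p. emeasure (reward_dist g 1) {r. post_update \<nu> \<gamma> 1 p r \<in> A}) \<in> borel_measurable borel"
      proof (rule R.measurable_emeasure)
        have e1: "{x \<in> space (borel \<Otimes>\<^sub>M reward_dist g 1). post_update \<nu> \<gamma> 1 (fst x) (snd x) \<in> A}
            = {x \<in> space (borel \<Otimes>\<^sub>M borel). post_update \<nu> \<gamma> 1 (fst x) (snd x) \<in> A}"
          by (simp add: space_pair_measure reward_dist_def)
        have e2: "{x \<in> space (borel \<Otimes>\<^sub>M borel). post_update \<nu> \<gamma> 1 (fst x) (snd x) \<in> A} \<in> sets (borel \<Otimes>\<^sub>M (borel::real measure))"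
          unfolding A_def post_update_def fdens_def normal_density_def by measurable
        have e3: "sets (borel \<Otimes>\<^sub>M reward_dist g 1) = sets (borel \<Otimes>\<^sub>M (borel::real measure))"
          by (intro sets_pair_measure_cong) (simp_all add: reward_dist_def)
        show "{x \<in> space (borel \<Otimes>\<^sub>M reward_dist g 1). snd x \<in> {r. post_update \<nu> \<gamma> 1 (fst x) r \<in> A}} \<in> sets (borel \<Otimes>\<^sub>M reward_dist g 1)"
          unfolding mem_Collect_eq e1 e3 by (rule e2)
      qed (simp add: reward_dist_def)
      then have "G \<in> borel_measurable borel" unfolding G_def by measurable
      then show ?thesis unfolding measurable_cong_sets[OF sM refl] .
    qed
    have Gpos: "0 < G p" if "p \<in> {0<..<1}" for p
      using pre_pos[of \<nu> \<gamma> p \<epsilon> g, OF ne] that e unfolding G_def A_def by (simp add: ennreal_zero_less_mult_iff)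
    have GK: "G p \<le> TS_kernel g \<nu> \<gamma> p A" for p
      unfolding G_def TS_kernel_def assms(3) by simp
    have "0 < (\<integral>\<^sup>+ p. G p \<partial>\<mu>)"
    proof (rule ccontr)
      assume "\<not> 0 < (\<integral>\<^sup>+ p. G p \<partial>\<mu>)"
      then have "(\<integral>\<^sup>+ p. G p \<partial>\<mu>) = 0" by (simp add: zero_less_iff_neq_zero)
      then have "AE p in \<mu>. G p = 0" using nn_integral_0_iff_AE[OF Gm] by simp
      with AE01 have "AE p in \<mu>. False"
        by eventually_elim (use Gpos in force)
      then show False using P.AE_False by simp
    qed
    also have "\<dots> \<le> (\<integral>\<^sup>+ p. TS_kernel g \<nu> \<gamma> p A \<partial>\<mu>)"
      by (rule nn_integral_mono) (rule GK)
    also have "\<dots> = emeasure \<mu> A" using inv[of A] unfolding A_def by simp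
    finally have "0 < emeasure \<mu> A" .
    moreover have "emeasure \<mu> A < top" using P.emeasure_le_1[of A]
      by (metis ennreal_one_less_top order_le_less_trans)
    ultimately show ?thesis unfolding A_def measure_def by (simp add: enn2real_positive_iff)
  qed
  have int: "integrable \<mu> (\<lambda>p. p)"
  proof (rule P.integrable_const_bound[where B=1])
    show "AE x in \<mu>. norm x \<le> 1" using AE01 by eventually_elim auto
  qed (rule idm)
  have i0: "0 \<le> (\<integral>p. p \<partial>\<mu>)"
    by (rule integral_nonneg_AE) (use AE01 in \<open>auto elim!: eventually_mono\<close>)
  have i1: "(\<integral>p. p \<partial>\<mu>) \<noteq> 0"
  proof
    assume "(\<integral>p. p \<partial>\<mu>) = 0"
    then have "AE p in \<mu>. p = 0"
    proof -
      have nn: "AE p in \<mu>. 0 \<le> p" using AE01 by eventually_elim auto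
      show ?thesis using integral_nonneg_eq_0_iff_AE[OF int nn] \<open>(\<integral>p. p \<partial>\<mu>) = 0\<close> by simp
    qed
    with AE01 have "AE p in \<mu>. False" by eventually_elim auto
    then show False using P.AE_False by simp
  qed
  have int2: "integrable \<mu> (\<lambda>p. 1 - p)" using int by simp
  have i2: "(\<integral>p. 1 - p \<partial>\<mu>) = 1 - (\<integral>p. p \<partial>\<mu>)"
    using int by (simp add: Bochner_Integration.integral_diff P.prob_space)
  have i3: "(\<integral>p. 1 - p \<partial>\<mu>) \<noteq> 0"
  proof
    assume "(\<integral>p. 1 - p \<partial>\<mu>) = 0"
    then have "AE p in \<mu>. 1 - p = 0"
    proof -
      have nn: "AE p in \<mu>. 0 \<le> 1 - p" using AE01 by eventually_elim auto
      show ?thesis using integral_nonneg_eq_0_iff_AE[OF int2 nn] \<open>(\<integral>p. 1 - p \<partial>\<mu>) = 0\<close> by simp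
    qed
    with AE01 have "AE p in \<mu>. False" by eventually_elim auto
    then show False using P.AE_False by simp
  qed
  have i4: "0 \<le> (\<integral>p. 1 - p \<partial>\<mu>)"
    by (rule integral_nonneg_AE) (use AE01 in \<open>eventually_elim, auto\<close>)
  show ?thesis using part1 i0 i1 i2 i3 i4 by auto
qed

end
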